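(* Let $\mathbf V$ be a locally finite variety of monoids, let $A=\{a_1,\dots,a_d\}$ be a finite alphabet, let $\sim$ be the congruence on $A^*$ given by the identities of $\mathbf V$ (so $A^*/{\sim}$ is the free monoid in $\mathbf V$ over $A$), and let $\sim_1$ be the analogous congruence on $A^*$ for the variety of monoids corresponding to $\mathsf{BPol}_1(\mathcal V)$ (so $A^*/{\sim_1}$ is the free monoid over $A$ in that variety). Define $$\xi:A^*\to (A^*/{\sim}\ \Diamond\ A^*/{\sim})^d,\qquad u\mapsto(\mu_{a_1}(u),\dots,\mu_{a_d}(u)),$$ where each $\mu_{a_i}$ is built from $\varphi=\psi=$ the canonical projection $A^*\to A^*/{\sim}$. Then $\xi(A^* )$ is isomorphic to $A^*/{\sim_1}$. In particular, if $|A^*/{\sim}|=n$, then $|A^*/{\sim_1}|\leq n2^{dn^2}$.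
   Context: $\mathcal V$ denotes the variety of languages corresponding (via Eilenberg's correspondence) to the pseudovariety of finite monoids in $\mathbf V$: a language $L\subseteq A^*$ lies in $\mathcal V(A)$ iff its syntactic monoid belongs to $\mathbf V$. $\mathsf{BPol}_1(\mathcal V)(A)$ is the class of all Boolean combinations of languages $L_0$ and $L_0bL_1$ with $L_0,L_1\in\mathcal V(A)$, $b\in A$; it is a variety of languages, and $A^*/{\sim_1}$ is the free monoid over $A$ in the corresponding variety of monoids, i.e. the smallest monoid recognizing all languages of $\mathsf{BPol}_1(\mathcal V)(A)$. For finite monoids $M,N$, the Schützenberger product $M\Diamond N$ is the set of $2\times2$ matrices $P$ with $P_{1,1}\in M$, $P_{2,2}\in N$, $P_{2,1}=\emptyset$, $P_{1,2}\subseteq M\times N$, with multiplication $(PQ)_{1,1}=P_{1,1}Q_{1,1}$, $(PQ)_{2,2}=P_{2,2}Q_{2,2}$, $(PQ)_{1,2}=\{(P_{1,1}x,y)\mid (x,y)\in Q_{1,2}\}\cup\{(z,tQ_{2,2})\mid (z,t)\in P_{1,2}\}$. Given homomorphisms $\varphi:A^*\to M$, $\psi:A^*\to N$ and $b\in A$, $\mu_b:A^*\to M\Diamond N$ is defined by $(\mu_b(u))_{1,1}=\varphi(u)$, $(\mu_b(u))_{2,2}=\psi(u)$, $(\mu_b(u))_{1,2}=\{(\varphi(u'),\psi(u''))\mid u=u'bu'',\ u',u''\in A^*\}$. *)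

theory Defs
  imports Main
begin

text \<open>A variety of monoids is given by a set of identities; an identity is a pair of
  words over the variables (natural numbers).\<close>
type_synonym ident = "nat list \<times> nat list"

text \<open>The congruence on words given by the identities E (equational derivability,
  Birkhoff): the least congruence containing all substitution instances of E.\<close>
inductive eqv :: "ident set \<Rightarrow> 'a list \<Rightarrow> 'a list \<Rightarrow> bool" for E where
  refl: "eqv E u u"
| sym: "eqv E u v \<Longrightarrow> eqv E v u"
| trans: "eqv E u v \<Longrightarrow> eqv E v w \<Longrightarrow> eqv E u w"
| ctx: "eqv E u v \<Longrightarrow> eqv E (x @ u @ y) (x @ v @ y)"
| inst: "(l, r) \<in> E \<Longrightarrow> eqv E (concat (map \<sigma> l)) (concat (map \<sigma> r))"

definition locally_finite :: "ident set \<Rightarrow> bool" where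
  "locally_finite E \<longleftrightarrow> (\<forall>k::nat. finite (lists {..<k} //
      {(u, v). u \<in> lists {..<k} \<and> v \<in> lists {..<k} \<and> eqv E u v}))"

definition synt_cong :: "'a list set \<Rightarrow> 'a list \<Rightarrow> 'a list \<Rightarrow> bool" where
  "synt_cong L u v \<longleftrightarrow> (\<forall>x y. x @ u @ y \<in> L \<longleftrightarrow> x @ v @ y \<in> L)"

text \<open>L is in the language variety of V iff its syntactic monoid satisfies all
  identities of V (every valuation in the syntactic monoid lifts to words).\<close>
definition Vlang :: "ident set \<Rightarrow> 'a list set set" where
  "Vlang E = {L. \<forall>(l, r) \<in> E. \<forall>\<sigma>. synt_cong L (concat (map \<sigma> l)) (concat (map \<sigma> r))}"

definition marked_prod :: "'a list set \<Rightarrow> 'a \<Rightarrow> 'a list set \<Rightarrow> 'a list set" where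
  "marked_prod L0 b L1 = {u @ [b] @ v | u v. u \<in> L0 \<and> v \<in> L1}"

inductive_set BPol1 :: "ident set \<Rightarrow> 'a list set set" for E where
  gen0: "L \<in> Vlang E \<Longrightarrow> L \<in> BPol1 E"
| gen1: "L0 \<in> Vlang E \<Longrightarrow> L1 \<in> Vlang E \<Longrightarrow> marked_prod L0 b L1 \<in> BPol1 E"
| compl: "L \<in> BPol1 E \<Longrightarrow> - L \<in> BPol1 E"
| union: "L \<in> BPol1 E \<Longrightarrow> K \<in> BPol1 E \<Longrightarrow> L \<union> K \<in> BPol1 E"

text \<open>sim_1: the congruence of the smallest monoid recognizing all languages of BPol_1(V)(A).\<close>
definition sim1 :: "ident set \<Rightarrow> 'a list \<Rightarrow> 'a list \<Rightarrow> bool" where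
  "sim1 E u v \<longleftrightarrow> (\<forall>L \<in> BPol1 E. synt_cong L u v)"

definition cls :: "('a list \<Rightarrow> 'a list \<Rightarrow> bool) \<Rightarrow> 'a list \<Rightarrow> 'a list set" where
  "cls R u = {v. R u v}"

definition cmul :: "('a list \<Rightarrow> 'a list \<Rightarrow> bool) \<Rightarrow> 'a list set \<Rightarrow> 'a list set \<Rightarrow> 'a list set" where
  "cmul R X Y = \<Union> {cls R (u @ v) | u v. u \<in> X \<and> v \<in> Y}"

text \<open>Schuetzenberger product elements: (P11, P12, P22).\<close>
type_synonym 'm sp = "'m \<times> ('m \<times> 'm) set \<times> 'm"

fun sp_mult :: "('m \<Rightarrow> 'm \<Rightarrow> 'm) \<Rightarrow> 'm sp \<Rightarrow> 'm sp \<Rightarrow> 'm sp" where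
  "sp_mult mul (m1, S1, n1) (m2, S2, n2) =
     (mul m1 m2,
      {(mul m1 x, y) | x y. (x, y) \<in> S2} \<union> {(z, mul t n2) | z t. (z, t) \<in> S1},
      mul n1 n2)"

definition mu :: "('a list \<Rightarrow> 'm) \<Rightarrow> ('a list \<Rightarrow> 'm) \<Rightarrow> 'a \<Rightarrow> 'a list \<Rightarrow> 'm sp" where
  "mu \<phi> \<psi> b u = (\<phi> u, {(\<phi> u', \<psi> u'') | u' u''. u = u' @ [b] @ u''}, \<psi> u)"

definition xi :: "ident set \<Rightarrow> 'a list \<Rightarrow> ('a \<Rightarrow> 'a list set sp)" where
  "xi E u = (\<lambda>b. mu (cls (eqv E)) (cls (eqv E)) b u)"

definition xi_mult :: "ident set \<Rightarrow> ('a \<Rightarrow> 'a list set sp) \<Rightarrow> ('a \<Rightarrow> 'a list set sp) \<Rightarrow> ('a \<Rightarrow> 'a list set sp)" where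
  "xi_mult E p q = (\<lambda>b. sp_mult (cmul (eqv E)) (p b) (q b))"

end

theory Submission
  imports Defs "HOL-Library.FuncSet"
begin

lemma eqv_cls_eq: "eqv E a b \<Longrightarrow> cls (eqv E) a = cls (eqv E) b"
  unfolding cls_def by (auto intro: eqv.trans eqv.sym)

lemma eqv_cls_iff: "cls (eqv E) a = cls (eqv E) b \<longleftrightarrow> eqv E a b"
  using eqv_cls_eq[of E a b] unfolding cls_def by (auto intro: eqv.refl)

lemma eqv_app: "eqv E u v \<Longrightarrow> eqv E u' v' \<Longrightarrow> eqv E (u @ u') (v @ v')"
proof -
  assume a: "eqv E u v" and b: "eqv E u' v'"
  have "eqv E ([] @ u @ u') ([] @ v @ u')" using a by (rule eqv.ctx)
  moreover have "eqv E (v @ u' @ []) (v @ v' @ [])" using b by (rule eqv.ctx)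
  ultimately show ?thesis by (auto intro: eqv.trans)
qed

lemma eqv_map: "eqv E u v \<Longrightarrow> eqv E (map h u) (map h v)"
proof (induction rule: eqv.induct)
  case (refl u) then show ?case by (rule eqv.refl)
next
  case (sym u v) then show ?case by (blast intro: eqv.sym)
next
  case (trans u v w) then show ?case by (blast intro: eqv.trans)
next
  case (ctx u v x y) then show ?case using eqv.ctx[of E "map h u" "map h v" "map h x" "map h y"] by simp
next
  case (inst l r \<sigma>) then show ?case using eqv.inst[of l r E "map h \<circ> \<sigma>"] by (simp add: map_concat)
qed

lemma cls_in_quot: "cls R u \<in> UNIV // {(u, v). R u v}"
  unfolding cls_def quotient_def by auto

lemma quot_range: "UNIV // {(u, v). R u v} = range (cls R)"
  unfolding cls_def quotient_def by auto

lemma finite_C: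
  assumes "locally_finite E"
  shows "finite (UNIV // {(u::'a::finite list, v). eqv E u v})"
proof -
  define k where "k = card (UNIV::'a set)"
  obtain g where g: "bij_betw g (UNIV::'a set) {0..<k}"
    using ex_bij_betw_finite_nat[of "UNIV::'a set"] finite unfolding k_def by blast
  define R' where "R' = {(u, v). u \<in> lists {..<k} \<and> v \<in> lists {..<k} \<and> eqv E u v}"
  have fin: "finite (lists {..<k} // R')" using assms unfolding locally_finite_def R'_def by blast
  define g' where "g' = inv g"
  have gg: "g' (g a) = a" for a using g unfolding g'_def bij_betw_def by (simp add: inv_f_f)
  have gk: "g a \<in> {..<k}" for a using g unfolding bij_betw_def by auto
  define h where "h Y = cls (eqv E) (map g' (SOME w. w \<in> Y))" for Y
  have "UNIV // {(u,v). eqv E u v} \<subseteq> h ` (lists {..<k} // R')"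
  proof
    fix X assume "X \<in> UNIV // {(u::'a list,v). eqv E u v}"
    then obtain u where X: "X = cls (eqv E) u" using quot_range by blast
    define Y where "Y = R' `` {map g u}"
    have mg: "map g u \<in> lists {..<k}" using gk by auto
    have Yq: "Y \<in> lists {..<k} // R'" unfolding Y_def using mg by (rule quotientI)
    have "map g u \<in> Y" unfolding Y_def R'_def using mg by (auto intro: eqv.refl)
    then have ex: "(SOME w. w \<in> Y) \<in> Y" by (rule someI)
    have inY: "z \<in> Y \<Longrightarrow> eqv E (map g u) z" for z unfolding Y_def R'_def by auto
    from inY[OF ex] have "eqv E (map g u) (SOME w. w \<in> Y)" .
    then have "eqv E (map g' (map g u)) (map g' (SOME w. w \<in> Y))" by (rule eqv_map)
    then have "eqv E u (map g' (SOME w. w \<in> Y))" by (simp add: gg comp_def)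
    then have "h Y = X" unfolding h_def X by (simp add: eqv_cls_eq)
    then show "X \<in> h ` (lists {..<k} // R')" using Yq by blast
  qed
  then show ?thesis using fin finite_subset by blast
qed

definition S :: "ident set \<Rightarrow> 'a \<Rightarrow> 'a list \<Rightarrow> ('a list set \<times> 'a list set) set" where
  "S E b u = {(cls (eqv E) u', cls (eqv E) u'') | u' u''. u = u' @ [b] @ u''}"

lemma xi_S: "xi E u b = (cls (eqv E) u, S E b u, cls (eqv E) u)"
  unfolding xi_def mu_def S_def by simp

lemma xi_eq_iff: "xi E u = xi E v \<longleftrightarrow> eqv E u v \<and> (\<forall>b. S E b u = S E b v)"
proof
  assume h: "xi E u = xi E v"
  have "xi E u b = xi E v b" for b using h by simp
  then have 1: "cls (eqv E) u = cls (eqv E) v \<and> S E b u = S E b v" for b unfolding xi_S by simp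
  from 1[of undefined] have "eqv E u v" by (simp only: eqv_cls_iff)
  then show "eqv E u v \<and> (\<forall>b. S E b u = S E b v)" using 1 by simp
next
  assume h: "eqv E u v \<and> (\<forall>b. S E b u = S E b v)"
  then have "cls (eqv E) u = cls (eqv E) v" by (simp only: eqv_cls_iff)
  then show "xi E u = xi E v" using h unfolding fun_eq_iff xi_S by simp
qed

lemma cmul_eqv: "cmul (eqv E) (cls (eqv E) u) (cls (eqv E) v) = cls (eqv E) (u @ v)"
proof -
  have 1: "cls (eqv E) (u' @ v') = cls (eqv E) (u @ v)"
    if a: "u' \<in> cls (eqv E) u" and b: "v' \<in> cls (eqv E) v" for u' v'
  proof -
    have "eqv E u u'" "eqv E v v'" using a b unfolding cls_def by simp_all
    then have "eqv E (u @ v) (u' @ v')" by (rule eqv_app)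
    then show ?thesis by (rule eqv_cls_eq[symmetric])
  qed
  have 2: "u \<in> cls (eqv E) u" "v \<in> cls (eqv E) v" unfolding cls_def by (simp_all add: eqv.refl)
  have "{cls (eqv E) (u' @ v') | u' v'. u' \<in> cls (eqv E) u \<and> v' \<in> cls (eqv E) v} = {cls (eqv E) (u @ v)}"
  proof
    show "{cls (eqv E) (u' @ v') | u' v'. u' \<in> cls (eqv E) u \<and> v' \<in> cls (eqv E) v} \<subseteq> {cls (eqv E) (u @ v)}"
      using 1 by blast
    show "{cls (eqv E) (u @ v)} \<subseteq> {cls (eqv E) (u' @ v') | u' v'. u' \<in> cls (eqv E) u \<and> v' \<in> cls (eqv E) v}"
      using 2 by blast
  qed
  then show ?thesis unfolding cmul_def by simp
qed

lemma split_app: "u @ v = w' @ [b] @ w'' \<longleftrightarrow>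
   (\<exists>v'. w' = u @ v' \<and> v = v' @ [b] @ w'') \<or> (\<exists>t. u = w' @ [b] @ t \<and> w'' = t @ v)"
proof
  assume "u @ v = w' @ [b] @ w''"
  then obtain us where "(u = w' @ us \<and> us @ v = b # w'') \<or> (u @ us = w' \<and> v = us @ b # w'')"
    using append_eq_append_conv2[of u v w' "b # w''"] by auto
  then show "(\<exists>v'. w' = u @ v' \<and> v = v' @ [b] @ w'') \<or> (\<exists>t. u = w' @ [b] @ t \<and> w'' = t @ v)"
  proof
    assume h: "u = w' @ us \<and> us @ v = b # w''"
    show ?thesis
    proof (cases us)
      case Nil then show ?thesis using h by auto
    next
      case (Cons c t) then show ?thesis using h by auto
    qed
  qed auto
qed auto

lemma S_app: "S E b (u @ v) =
   {(cmul (eqv E) (cls (eqv E) u) x, y) | x y. (x, y) \<in> S E b v} \<union>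
   {(z, cmul (eqv E) t (cls (eqv E) v)) | z t. (z, t) \<in> S E b u}"
  (is "?L = ?A \<union> ?B")
proof
  show "?L \<subseteq> ?A \<union> ?B"
  proof
    fix p assume "p \<in> ?L"
    then obtain w' w'' where p: "p = (cls (eqv E) w', cls (eqv E) w'')" and w: "u @ v = w' @ [b] @ w''"
      unfolding S_def by blast
    from w[unfolded split_app] show "p \<in> ?A \<union> ?B"
    proof
      assume "\<exists>v'. w' = u @ v' \<and> v = v' @ [b] @ w''"
      then obtain v' where v': "w' = u @ v'" "v = v' @ [b] @ w''" by blast
      then have m: "(cls (eqv E) v', cls (eqv E) w'') \<in> S E b v" unfolding S_def by blast
      have "p = (cmul (eqv E) (cls (eqv E) u) (cls (eqv E) v'), cls (eqv E) w'')"
        using p v' by (simp add: cmul_eqv)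
      then have "p \<in> ?A" using m by blast
      then show ?thesis by (rule UnI1)
    next
      assume "\<exists>t. u = w' @ [b] @ t \<and> w'' = t @ v"
      then obtain t where t: "u = w' @ [b] @ t" "w'' = t @ v" by blast
      then have m: "(cls (eqv E) w', cls (eqv E) t) \<in> S E b u" unfolding S_def by blast
      have "p = (cls (eqv E) w', cmul (eqv E) (cls (eqv E) t) (cls (eqv E) v))"
        using p t by (simp add: cmul_eqv)
      then have "p \<in> ?B" using m by blast
      then show ?thesis by (rule UnI2)
    qed
  qed
next
  show "?A \<union> ?B \<subseteq> ?L"
  proof
    fix p assume "p \<in> ?A \<union> ?B"
    then show "p \<in> ?L"
    proof
      assume "p \<in> ?A"
      then obtain x y where p: "p = (cmul (eqv E) (cls (eqv E) u) x, y)" and xy: "(x, y) \<in> S E b v"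
        by blast
      from xy obtain v' w'' where "x = cls (eqv E) v'" "y = cls (eqv E) w''" "v = v' @ [b] @ w''"
        unfolding S_def by blast
      then have "p = (cls (eqv E) (u @ v'), cls (eqv E) w'')" "u @ v = (u @ v') @ [b] @ w''"
        using p by (simp_all add: cmul_eqv)
      then show ?thesis unfolding S_def by blast
    next
      assume "p \<in> ?B"
      then obtain z t where p: "p = (z, cmul (eqv E) t (cls (eqv E) v))" and zt: "(z, t) \<in> S E b u"
        by blast
      from zt obtain w' t' where "z = cls (eqv E) w'" "t = cls (eqv E) t'" "u = w' @ [b] @ t'"
        unfolding S_def by blast
      then have "p = (cls (eqv E) w', cls (eqv E) (t' @ v))" "u @ v = w' @ [b] @ (t' @ v)"
        using p by (simp_all add: cmul_eqv)
      then show ?thesis unfolding S_def by blast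
    qed
  qed
qed

lemma xi_mult_xi: "xi_mult E (xi E u) (xi E v) = xi E (u @ v)"
proof
  fix b
  have "xi_mult E (xi E u) (xi E v) b = sp_mult (cmul (eqv E)) (cls (eqv E) u, S E b u, cls (eqv E) u)
      (cls (eqv E) v, S E b v, cls (eqv E) v)" unfolding xi_mult_def xi_S ..
  also have "\<dots> = (cls (eqv E) (u @ v), S E b (u @ v), cls (eqv E) (u @ v))"
    unfolding sp_mult.simps cmul_eqv S_app ..
  finally show "xi_mult E (xi E u) (xi E v) b = xi E (u @ v) b" unfolding xi_S .
qed

lemma vlang_synt: "eqv E u v \<Longrightarrow> L \<in> Vlang E \<Longrightarrow> synt_cong L u v"
proof (induction rule: eqv.induct)
  case (refl u) then show ?case by (simp add: synt_cong_def)
next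
  case (sym u v) then show ?case by (simp add: synt_cong_def)
next
  case (trans u v w) then show ?case by (simp add: synt_cong_def)
next
  case (ctx u v x y) then show ?case unfolding synt_cong_def
    by (metis append.assoc)
next
  case (inst l r \<sigma>) then show ?case unfolding Vlang_def by blast
qed

lemma vlang_sat: "L \<in> Vlang E \<Longrightarrow> eqv E u v \<Longrightarrow> u \<in> L \<Longrightarrow> v \<in> L"
  using vlang_synt[of E u v L] unfolding synt_cong_def by (metis append.left_neutral append_Nil2)

lemma sat_vlang:
  assumes "\<And>a b. eqv E a b \<Longrightarrow> a \<in> K \<Longrightarrow> b \<in> K"
  shows "K \<in> Vlang E"
  unfolding Vlang_def synt_cong_def
proof (clarify)
  fix l r and \<sigma> :: "nat \<Rightarrow> 'a list" and x y :: "'a list"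
  assume "(l, r) \<in> E"
  then have "eqv E (concat (map \<sigma> l)) (concat (map \<sigma> r))" by (rule eqv.inst)
  then have e: "eqv E (x @ concat (map \<sigma> l) @ y) (x @ concat (map \<sigma> r) @ y)" by (rule eqv.ctx)
  show "(x @ concat (map \<sigma> l) @ y \<in> K) = (x @ concat (map \<sigma> r) @ y \<in> K)"
    using assms e eqv.sym by blast
qed

lemma cls_vlang: "cls (eqv E) w \<in> Vlang E"
  by (rule sat_vlang) (auto simp: cls_def intro: eqv.trans)

lemma xi_synt:
  assumes "xi E u = xi E v"
  shows "xi E (x @ u @ y) = xi E (x @ v @ y)"
  by (metis assms xi_mult_xi)

lemma bpol_sat: "L \<in> BPol1 E \<Longrightarrow> xi E u = xi E v \<Longrightarrow> (u \<in> L \<longleftrightarrow> v \<in> L)"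
proof (induction arbitrary: u v rule: BPol1.induct)
  case (gen0 L)
  then have "eqv E u v" using xi_eq_iff by blast
  then show ?case using gen0(1) vlang_sat eqv.sym by metis
next
  case (gen1 L0 L1 b)
  have one: "v \<in> marked_prod L0 b L1" if m1: "u \<in> marked_prod L0 b L1" and m2: "xi E u = xi E v" for u v
  proof -
    obtain u' u'' where u: "u = u' @ [b] @ u''" "u' \<in> L0" "u'' \<in> L1"
      using m1 unfolding marked_prod_def by blast
    have "(cls (eqv E) u', cls (eqv E) u'') \<in> S E b u" unfolding S_def using u by blast
    then have "(cls (eqv E) u', cls (eqv E) u'') \<in> S E b v" using m2 xi_eq_iff by metis
    then obtain v' v'' where v: "v = v' @ [b] @ v''" "cls (eqv E) u' = cls (eqv E) v'"
      "cls (eqv E) u'' = cls (eqv E) v''" unfolding S_def by blast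
    have "v' \<in> L0" using vlang_sat[OF gen1(1)] v(2) u(2) eqv_cls_iff by metis
    moreover have "v'' \<in> L1" using vlang_sat[OF gen1(2)] v(3) u(3) eqv_cls_iff by metis
    ultimately show ?thesis unfolding marked_prod_def using v(1) by blast
  qed
  show ?case using one gen1(3) by metis
next
  case (compl L) then show ?case by blast
next
  case (union L K) then show ?case by blast
qed

lemma xi_imp_sim1: "xi E u = xi E v \<Longrightarrow> sim1 E u v"
  unfolding sim1_def synt_cong_def using bpol_sat xi_synt by metis

lemma sim1_mem: "sim1 E u v \<Longrightarrow> L \<in> BPol1 E \<Longrightarrow> u \<in> L \<Longrightarrow> v \<in> L"
  unfolding sim1_def synt_cong_def by (metis append.left_neutral append_Nil2)

lemma sim1_sym: "sim1 E u v \<Longrightarrow> sim1 E v u"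
  unfolding sim1_def synt_cong_def by blast

lemma sim1_S: assumes "sim1 E u v" shows "S E b u \<subseteq> S E b v"
proof
  fix p assume "p \<in> S E b u"
  then obtain u' u'' where p: "p = (cls (eqv E) u', cls (eqv E) u'')" and u: "u = u' @ [b] @ u''"
    unfolding S_def by blast
  define L where "L = marked_prod (cls (eqv E) u') b (cls (eqv E) u'')"
  have L: "L \<in> BPol1 E" unfolding L_def by (intro BPol1.gen1 cls_vlang)
  have "u \<in> L" unfolding L_def marked_prod_def cls_def using u by (auto intro: eqv.refl)
  then have "v \<in> L" using sim1_mem[OF assms L] by blast
  then obtain v' v'' where "v = v' @ [b] @ v''" "eqv E u' v'" "eqv E u'' v''"
    unfolding L_def marked_prod_def cls_def by blast
  then show "p \<in> S E b v" unfolding S_def p by (metis (mono_tags, lifting) eqv_cls_eq mem_Collect_eq)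
qed

lemma sim1_imp_xi: assumes "sim1 E u v" shows "xi E u = xi E v"
proof -
  have L: "cls (eqv E) u \<in> BPol1 E" by (intro BPol1.gen0 cls_vlang)
  have "u \<in> cls (eqv E) u" unfolding cls_def by (rule CollectI, rule eqv.refl)
  then have "v \<in> cls (eqv E) u" using sim1_mem[OF assms L] by blast
  then have "eqv E u v" unfolding cls_def by simp
  moreover have "S E b u = S E b v" for b using sim1_S assms sim1_sym by (metis subset_antisym)
  ultimately show ?thesis using xi_eq_iff by blast
qed

lemma sim1_iff: "sim1 E u v \<longleftrightarrow> xi E u = xi E v"
  using sim1_imp_xi xi_imp_sim1 by blast

lemma sim1_cls_eq: "cls (sim1 E) u = cls (sim1 E) v \<longleftrightarrow> xi E u = xi E v"
  unfolding cls_def sim1_iff by (auto simp: fun_eq_iff)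

lemma cmul_sim1: "cmul (sim1 E) (cls (sim1 E) u) (cls (sim1 E) v) = cls (sim1 E) (u @ v)"
proof -
  have 1: "cls (sim1 E) (u' @ v') = cls (sim1 E) (u @ v)"
    if a: "u' \<in> cls (sim1 E) u" and b: "v' \<in> cls (sim1 E) v" for u' v'
  proof -
    have "xi E u = xi E u'" "xi E v = xi E v'" using a b unfolding cls_def sim1_iff by simp_all
    then have "xi E (u' @ v') = xi E (u @ v)" by (simp add: xi_mult_xi[symmetric])
    then show ?thesis by (simp only: sim1_cls_eq)
  qed
  have 2: "u \<in> cls (sim1 E) u" "v \<in> cls (sim1 E) v" unfolding cls_def sim1_iff by simp_all
  have "{cls (sim1 E) (u' @ v') | u' v'. u' \<in> cls (sim1 E) u \<and> v' \<in> cls (sim1 E) v} = {cls (sim1 E) (u @ v)}"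
  proof
    show "{cls (sim1 E) (u' @ v') | u' v'. u' \<in> cls (sim1 E) u \<and> v' \<in> cls (sim1 E) v} \<subseteq> {cls (sim1 E) (u @ v)}"
      using 1 by blast
    show "{cls (sim1 E) (u @ v)} \<subseteq> {cls (sim1 E) (u' @ v') | u' v'. u' \<in> cls (sim1 E) u \<and> v' \<in> cls (sim1 E) v}"
      using 2 by blast
  qed
  then show ?thesis unfolding cmul_def by simp
qed

theorem proposition7:
  fixes E :: "ident set"
  assumes "locally_finite E"
  shows "(\<exists>f. bij_betw f (range (xi E :: 'a::finite list \<Rightarrow> _)) (UNIV // {(u :: 'a list, v). sim1 E u v})
             \<and> (\<forall>u v. f (xi_mult E (xi E u) (xi E v)) = cmul (sim1 E) (f (xi E u)) (f (xi E v))))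
         \<and> (let n = card (UNIV // {(u :: 'a list, v). eqv E u v})
            in card (UNIV // {(u :: 'a list, v). sim1 E u v}) \<le> n * 2 ^ (card (UNIV :: 'a set) * n ^ 2))"
proof -
  define f where "f X = cls (sim1 E) (SOME u::'a list. xi E u = X)" for X
  have fxi: "f (xi E u) = cls (sim1 E) u" for u :: "'a list"
  proof -
    have "xi E (SOME w::'a list. xi E w = xi E u) = xi E u" by (rule someI_ex) blast
    then show ?thesis unfolding f_def sim1_cls_eq .
  qed
  have bij: "bij_betw f (range (xi E :: 'a list \<Rightarrow> _)) (UNIV // {(u :: 'a list, v). sim1 E u v})"
    unfolding bij_betw_def
  proof
    show "inj_on f (range (xi E :: 'a list \<Rightarrow> _))"
      by (auto simp: inj_on_def fxi sim1_cls_eq)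
    show "f ` range (xi E :: 'a list \<Rightarrow> _) = UNIV // {(u :: 'a list, v). sim1 E u v}"
      unfolding quot_range by (auto simp: fxi image_iff)
  qed
  have mult: "\<forall>u v. f (xi_mult E (xi E u) (xi E v)) = cmul (sim1 E) (f (xi E u)) (f (xi E v))"
    by (simp add: xi_mult_xi fxi cmul_sim1)
  define C where "C = UNIV // {(u :: 'a list, v). eqv E u v}"
  define n where "n = card C"
  have finC: "finite C" unfolding C_def using finite_C[OF assms] .
  define P where "P = PiE (UNIV::'a set) (\<lambda>_. Pow (C \<times> C))"
  define G :: "'a list set \<times> ('a \<Rightarrow> ('a list set \<times> 'a list set) set) \<Rightarrow> ('a \<Rightarrow> 'a list set sp)"
    where "G = (\<lambda>(c, s) b. (c, s b, c))"
  have sub: "range (xi E :: 'a list \<Rightarrow> _) \<subseteq> G ` (C \<times> P)"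
  proof
    fix X assume "X \<in> range (xi E :: 'a list \<Rightarrow> _)"
    then obtain u where X: "X = xi E u" by blast
    have SC: "S E b u \<subseteq> C \<times> C" for b unfolding S_def C_def using cls_in_quot by blast
    have "(\<lambda>b. S E b u) \<in> P" unfolding P_def PiE_iff using SC by simp
    moreover have "cls (eqv E) u \<in> C" unfolding C_def by (rule cls_in_quot)
    ultimately have m: "(cls (eqv E) u, \<lambda>b. S E b u) \<in> C \<times> P" by simp
    have "X = G (cls (eqv E) u, \<lambda>b. S E b u)" unfolding X G_def fun_eq_iff xi_S by simp
    then show "X \<in> G ` (C \<times> P)" using m by (rule image_eqI)
  qed
  have finP: "finite P" unfolding P_def using finC by (simp add: finite_PiE)
  have cardPow: "card (Pow (C \<times> C)) = 2 ^ (n * n)"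
    using finC by (simp add: card_Pow card_cartesian_product n_def)
  have cardP: "card P = (2 ^ (n * n)) ^ card (UNIV::'a set)"
    unfolding P_def by (simp add: card_PiE cardPow)
  have ar: "n * (2 ^ (n * n)) ^ card (UNIV::'a set) = n * 2 ^ (card (UNIV :: 'a set) * n ^ 2)"
    by (simp add: power_mult[symmetric] power2_eq_square ac_simps)
  have finCP: "finite (C \<times> P)" using finC finP by (rule finite_cartesian_product)
  have "card (UNIV // {(u :: 'a list, v). sim1 E u v}) = card (range (xi E :: 'a list \<Rightarrow> _))"
    by (rule bij_betw_same_card[OF bij, symmetric])
  also have "\<dots> \<le> card (G ` (C \<times> P))"
    by (rule card_mono[OF finite_imageI[OF finCP] sub])
  also have "\<dots> \<le> card (C \<times> P)" by (rule card_image_le[OF finCP])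
  also have "\<dots> = card C * card P" by (rule card_cartesian_product)
  also have "\<dots> = n * 2 ^ (card (UNIV :: 'a set) * n ^ 2)"
    unfolding cardP n_def[symmetric] by (rule ar)
  finally have bound: "card (UNIV // {(u :: 'a list, v). sim1 E u v}) \<le> n * 2 ^ (card (UNIV :: 'a set) * n ^ 2)" .
  show ?thesis unfolding Let_def
  proof (intro conjI)
    show "\<exists>f. bij_betw f (range (xi E :: 'a list \<Rightarrow> _)) (UNIV // {(u :: 'a list, v). sim1 E u v})
             \<and> (\<forall>u v. f (xi_mult E (xi E u) (xi E v)) = cmul (sim1 E) (f (xi E u)) (f (xi E v)))"
      using bij mult by blast
    show "card (UNIV // {(u :: 'a list, v). sim1 E u v}) \<le> card (UNIV // {(u :: 'a list, v). eqv E u v}) * 2 ^ (card (UNIV :: 'a set) * card (UNIV // {(u :: 'a list, v). eqv E u v}) ^ 2)"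
      using bound unfolding n_def C_def .
  qed
qed

end
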